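(* Let $\pi_2$ be the five-dimensional complex associative algebra with basis $e_1,\dots,e_5$ and nonzero products $e_1e_1=e_2$, $e_1e_2=e_2e_1=e_3$, $e_1e_4=e_4e_1=e_5$, $e_4e_4=e_5$ (all other products of basis elements are zero). The group $LocAut(\pi_2)$ of all local automorphisms of $\pi_2$ satisfies $$LocAut(\pi_2)=\{\exp(\nabla):\nabla\in LocDer(\pi_2)\},$$ where $LocDer(\pi_2)$ is the set of all local derivations of $\pi_2$ and $\exp(\nabla)=I+\sum_{n=1}^\infty \frac{\nabla^n}{n!}$, with $I$ the identity map of $\pi_2$.
   Context: An automorphism is a bijective linear map $\Phi$ with $\Phi(xy)=\Phi(x)\Phi(y)$; a linear map $\Phi$ is a local automorphism if for every $\nu$ there is an automorphism $\varphi_\nu$ with $\Phi(\nu)=\varphi_\nu(\nu)$. A derivation is a linear map $D$ with $D(xy)=D(x)y+xD(y)$; a linear map $\nabla$ is a local derivation if for every $x$ there is a derivation $D_x$ with $\nabla(x)=D_x(x)$. Local automorphisms of a finite-dimensional algebra form a group under composition. *)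

theory Defs
  imports "HOL-Analysis.Analysis"
begin

text \<open>The algebra pi2 is modelled on complex^5; coordinate k (k = 1..5) of a vector
  is its coefficient at the basis vector e_k (in the numeral type 5 the index 5 is
  the fifth element, distinct from 1..4).\<close>

type_synonym pi2 = "complex ^ 5"

definition pi2_mult :: "pi2 \<Rightarrow> pi2 \<Rightarrow> pi2" where
  "pi2_mult x y = (\<chi> k.
      if k = 2 then x$1 * y$1
      else if k = 3 then x$1 * y$2 + x$2 * y$1
      else if k = 5 then x$1 * y$4 + x$4 * y$1 + x$4 * y$4
      else 0)"

definition clinear :: "(pi2 \<Rightarrow> pi2) \<Rightarrow> bool" where
  "clinear f \<longleftrightarrow> Vector_Spaces.linear (*s) (*s) f"

definition is_aut :: "(pi2 \<Rightarrow> pi2) \<Rightarrow> bool" where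
  "is_aut \<Phi> \<longleftrightarrow> clinear \<Phi> \<and> bij \<Phi> \<and> (\<forall>x y. \<Phi> (pi2_mult x y) = pi2_mult (\<Phi> x) (\<Phi> y))"

definition local_aut :: "(pi2 \<Rightarrow> pi2) \<Rightarrow> bool" where
  "local_aut \<Phi> \<longleftrightarrow> clinear \<Phi> \<and> (\<forall>v. \<exists>\<phi>. is_aut \<phi> \<and> \<Phi> v = \<phi> v)"

definition is_der :: "(pi2 \<Rightarrow> pi2) \<Rightarrow> bool" where
  "is_der D \<longleftrightarrow> clinear D \<and>
     (\<forall>x y. D (pi2_mult x y) = pi2_mult (D x) y + pi2_mult x (D y))"

definition local_der :: "(pi2 \<Rightarrow> pi2) \<Rightarrow> bool" where
  "local_der N \<longleftrightarrow> clinear N \<and> (\<forall>x. \<exists>D. is_der D \<and> N x = D x)"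

definition exp_map :: "(pi2 \<Rightarrow> pi2) \<Rightarrow> (pi2 \<Rightarrow> pi2)" where
  "exp_map N = (\<lambda>v. v + (\<Sum>n. (1 / fact (Suc n) :: complex) *s ((N ^^ Suc n) v)))"

end

theory Submission
  imports Defs
begin

lemma exhaust_5:
  fixes x :: 5
  shows "x = 1 \<or> x = 2 \<or> x = 3 \<or> x = 4 \<or> x = 5"
proof (induct x)
  case (of_int z)
  then have "z = 0 \<or> z = 1 \<or> z = 2 \<or> z = 3 \<or> z = 4" by fastforce
  then show ?case by auto
qed

lemma forall_5: "(\<forall>i::5. P i) \<longleftrightarrow> P 1 \<and> P 2 \<and> P 3 \<and> P 4 \<and> P 5"
  by (metis exhaust_5)

definition E :: "5 \<Rightarrow> pi2" where "E k = axis k 1"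

lemma E_nth [simp]: "E k $ i = (if i = k then 1 else 0)"
  by (simp add: E_def axis_def)

lemma clinear_iff:
  "clinear f \<longleftrightarrow> (\<forall>x y. f (x + y) = f x + f y) \<and> (\<forall>c x. f (c *s x) = c *s f x)"
  by (simp add: clinear_def Vector_Spaces.linear_iff vec.vector_space_axioms)

lemma vec5_expand:
  "(x::pi2) = x$1 *s E 1 + x$2 *s E 2 + x$3 *s E 3 + x$4 *s E 4 + x$5 *s E 5"
  by (simp add: vec_eq_iff forall_5)

lemma clinear_expand:
  assumes "clinear f"
  shows "f x = x$1 *s f (E 1) + x$2 *s f (E 2) + x$3 *s f (E 3) + x$4 *s f (E 4) + x$5 *s f (E 5)"
proof -
  from assms have add: "\<And>x y. f (x+y) = f x + f y" and sc: "\<And>c x. f (c *s x) = c *s f x"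
    by (auto simp: clinear_iff)
  have "f x = f (x$1 *s E 1 + x$2 *s E 2 + x$3 *s E 3 + x$4 *s E 4 + x$5 *s E 5)"
    by (rule arg_cong[where f=f, OF vec5_expand])
  also have "\<dots> = x$1 *s f (E 1) + x$2 *s f (E 2) + x$3 *s f (E 3) + x$4 *s f (E 4) + x$5 *s f (E 5)"
    by (simp add: add sc)
  finally show ?thesis .
qed

lemma clinear_diff:
  assumes "clinear f" shows "f (x - y) = f x - f y"
proof -
  from assms have add: "\<And>x y. f (x+y) = f x + f y" and sc: "\<And>c x. f (c *s x) = c *s f x"
    by (auto simp: clinear_iff)
  have "x - y = x + (-1) *s y" by (simp add: vec_eq_iff)
  then have "f (x - y) = f x + (-1) *s f y" by (simp only: add sc)
  then show ?thesis by (simp add: vec_eq_iff)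
qed

lemma clinear_zero:
  assumes "clinear f" shows "f 0 = 0"
  using clinear_diff[OF assms, of 0 0] by simp

definition mat11 :: "complex \<Rightarrow> complex \<Rightarrow> complex \<Rightarrow> complex \<Rightarrow> complex \<Rightarrow> complex \<Rightarrow> complex
   \<Rightarrow> complex \<Rightarrow> complex \<Rightarrow> complex \<Rightarrow> complex \<Rightarrow> pi2 \<Rightarrow> pi2" where
 "mat11 d1 d2 d3 d4 d5 a21 a31 a51 a32 a34 a54 v = (\<chi> k.
   if k = 1 then d1 * v$1
   else if k = 2 then a21 * v$1 + d2 * v$2
   else if k = 3 then a31 * v$1 + a32 * v$2 + d3 * v$3 + a34 * (v$1 + v$4)
   else if k = 4 then d4 * (v$1 + v$4) - d1 * v$1
   else a51 * v$1 + a54 * (v$1 + v$4) + d5 * (v$2 + v$5) - a21 * v$1 - d2 * v$2)"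

lemma mat11_nth [simp]:
  "mat11 d1 d2 d3 d4 d5 a21 a31 a51 a32 a34 a54 v $ 1 = d1 * v$1"
  "mat11 d1 d2 d3 d4 d5 a21 a31 a51 a32 a34 a54 v $ 2 = a21 * v$1 + d2 * v$2"
  "mat11 d1 d2 d3 d4 d5 a21 a31 a51 a32 a34 a54 v $ 3 = a31 * v$1 + a32 * v$2 + d3 * v$3 + a34 * (v$1 + v$4)"
  "mat11 d1 d2 d3 d4 d5 a21 a31 a51 a32 a34 a54 v $ 4 = d4 * (v$1 + v$4) - d1 * v$1"
  "mat11 d1 d2 d3 d4 d5 a21 a31 a51 a32 a34 a54 v $ 5 = a51 * v$1 + a54 * (v$1 + v$4) + d5 * (v$2 + v$5) - a21 * v$1 - d2 * v$2"
  by (simp_all add: mat11_def)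

lemma clinear_mat11: "clinear (mat11 d1 d2 d3 d4 d5 a21 a31 a51 a32 a34 a54)"
  unfolding clinear_iff by (simp add: vec_eq_iff forall_5 algebra_simps)

fun hh :: "nat \<Rightarrow> complex \<Rightarrow> complex \<Rightarrow> complex" where
  "hh 0 a b = 0"
| "hh (Suc n) a b = a * hh n a b + b ^ n"

fun hh2 :: "nat \<Rightarrow> complex \<Rightarrow> complex \<Rightarrow> complex \<Rightarrow> complex" where
  "hh2 0 a b c = 0"
| "hh2 (Suc n) a b c = a * hh2 n a b c + hh n b c"

lemma mat11_pow:
  "(mat11 d1 d2 d3 d4 d5 a21 a31 a51 a32 a34 a54 ^^ n) v =
   mat11 (d1^n) (d2^n) (d3^n) (d4^n) (d5^n) (a21 * hh n d2 d1)
     (a31 * hh n d3 d1 + a32 * a21 * hh2 n d3 d2 d1) (a51 * hh n d5 d1)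
     (a32 * hh n d3 d2) (a34 * hh n d3 d4) (a54 * hh n d5 d4) v"
proof (induction n)
  case 0 show ?case by (simp add: vec_eq_iff forall_5)
next
  case (Suc n) show ?case by (simp add: Suc vec_eq_iff forall_5 algebra_simps)
qed

lemma mat11_scale:
  "c *s mat11 d1 d2 d3 d4 d5 a21 a31 a51 a32 a34 a54 v =
   mat11 (c*d1) (c*d2) (c*d3) (c*d4) (c*d5) (c*a21) (c*a31) (c*a51) (c*a32) (c*a34) (c*a54) v"
  by (simp add: vec_eq_iff forall_5 algebra_simps)

lemma sums_vec:
  fixes f :: "nat \<Rightarrow> pi2"
  assumes "\<And>k. (\<lambda>n. f n $ k) sums (s $ k)"
  shows "f sums s"
  unfolding sums_def
  by (rule vec_tendstoI) (use assms in \<open>simp add: sums_def sum_component\<close>)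

lemma mat11_sums:
  assumes "D1 sums s1" "D2 sums s2" "D3 sums s3" "D4 sums s4" "D5 sums s5"
    "A21 sums t21" "A31 sums t31" "A51 sums t51" "A32 sums t32" "A34 sums t34" "A54 sums t54"
  shows "(\<lambda>n. mat11 (D1 n) (D2 n) (D3 n) (D4 n) (D5 n) (A21 n) (A31 n) (A51 n) (A32 n) (A34 n) (A54 n) v)
     sums mat11 s1 s2 s3 s4 s5 t21 t31 t51 t32 t34 t54 v"
proof (rule sums_vec)
  fix k :: 5
  show "(\<lambda>n. mat11 (D1 n) (D2 n) (D3 n) (D4 n) (D5 n) (A21 n) (A31 n) (A51 n) (A32 n) (A34 n) (A54 n) v $ k)
     sums mat11 s1 s2 s3 s4 s5 t21 t31 t51 t32 t34 t54 v $ k"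
    using exhaust_5[of k]
    by (auto intro!: sums_add sums_diff sums_mult2 assms)
qed


lemma expc: "(\<lambda>n. d ^ n / fact n) sums exp (d::complex)"
proof -
  have "(\<lambda>n. d ^ n /\<^sub>R fact n) sums exp d" by (rule exp_converges)
  moreover have "(\<lambda>n. d ^ n /\<^sub>R fact n) = (\<lambda>n. d ^ n / fact n)"
    by (rule ext) (simp add: scaleR_conv_of_real divide_inverse mult.commute)
  ultimately show ?thesis by simp
qed

lemma hh_bound:
  assumes "1 \<le> R" "norm a \<le> R" "norm b \<le> R"
  shows "norm (hh n a b) \<le> (2*R)^n"
proof (induction n)
  case 0 then show ?case by simp
next
  case (Suc n)
  have "norm (hh (Suc n) a b) \<le> norm a * norm (hh n a b) + norm b ^ n"
    by (simp add: norm_triangle_le norm_mult norm_power)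
  also have "\<dots> \<le> R * (2*R)^n + R^n"
    using assms Suc by (intro add_mono mult_mono power_mono) auto
  also have "\<dots> \<le> (2*R)^Suc n"
  proof -
    have "R^n \<le> (2*R)^n" using assms by (intro power_mono) auto
    also have "\<dots> \<le> R * (2*R)^n" using assms by simp
    finally have "R^n \<le> R * (2*R)^n" .
    moreover have "(2*R)^Suc n = R * (2*R)^n + R * (2*R)^n" by (simp add: field_simps)
    ultimately show ?thesis by linarith
  qed
  finally show ?case .
qed

lemma hh2_bound:
  assumes "1 \<le> R" "norm a \<le> R" "norm b \<le> R" "norm c \<le> R"
  shows "norm (hh2 n a b c) \<le> (2*R)^n"
proof (induction n)
  case 0 then show ?case by simp
next
  case (Suc n)
  have "norm (hh2 (Suc n) a b c) \<le> norm a * norm (hh2 n a b c) + norm (hh n b c)"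
    by (simp add: norm_triangle_le norm_mult)
  also have "\<dots> \<le> R * (2*R)^n + (2*R)^n"
    using assms Suc hh_bound[of R b c n] by (intro add_mono mult_mono) auto
  also have "\<dots> \<le> (2*R)^Suc n" using assms by simp
  finally show ?case .
qed

lemma summable_bound:
  assumes "\<And>n. norm (f n :: complex) \<le> (2*R)^n"
  shows "summable (\<lambda>n. f n / fact n)"
proof (rule summable_comparison_test)
  have "norm (f n / fact n) \<le> inverse (fact n) * (2*R)^n" for n
  proof -
    have "norm (f n / fact n) = norm (f n) / fact n" by (simp add: norm_divide norm_fact)
    also have "\<dots> \<le> (2*R)^n / fact n" by (rule divide_right_mono[OF assms]) simp
    finally show ?thesis by (simp add: divide_inverse mult.commute)
  qed
  then show "\<exists>N. \<forall>n\<ge>N. norm (f n / fact n) \<le> inverse (fact n) * (2*R)^n" by blast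
  show "summable (\<lambda>n. inverse (fact n) * (2*R)^n)" by (rule summable_exp)
qed

lemma summable_hh: "summable (\<lambda>n. hh n a b / fact n)"
  by (rule summable_bound[of _ "1 + norm a + norm b"]) (rule hh_bound, auto)

lemma summable_hh2: "summable (\<lambda>n. hh2 n a b c / fact n)"
  by (rule summable_bound[of _ "1 + norm a + norm b + norm c"]) (rule hh2_bound, auto)

definition EE :: "complex \<Rightarrow> complex \<Rightarrow> complex" where
  "EE a b = (\<Sum>n. hh n a b / fact n)"
definition CC :: "complex \<Rightarrow> complex \<Rightarrow> complex \<Rightarrow> complex" where
  "CC a b c = (\<Sum>n. hh2 n a b c / fact n)"

lemma sums_pow: "(\<lambda>n. 1 / fact (Suc n) * d ^ Suc n) sums (exp d - (1::complex))"
proof -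
  have "(\<lambda>n. d ^ n / fact n) sums (exp d - 1 + 1)" using expc[of d] by simp
  then have "(\<lambda>n. d ^ Suc n / fact (Suc n)) sums (exp d - 1)"
    by (subst sums_Suc_iff) simp
  then show ?thesis by simp
qed

lemma sums_hh_Suc: "(\<lambda>n. hh (Suc n) a b / fact (Suc n)) sums EE a b"
proof -
  have "(\<lambda>n. hh n a b / fact n) sums (EE a b + 0)"
    unfolding EE_def using summable_hh by (simp add: summable_sums)
  then show ?thesis by (subst sums_Suc_iff) simp
qed

lemma sums_hh2_Suc: "(\<lambda>n. hh2 (Suc n) a b c / fact (Suc n)) sums CC a b c"
proof -
  have "(\<lambda>n. hh2 n a b c / fact n) sums (CC a b c + 0)"
    unfolding CC_def using summable_hh2 by (simp add: summable_sums)
  then show ?thesis by (subst sums_Suc_iff) simp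
qed

lemma sums_c_hh: "(\<lambda>n. 1 / fact (Suc n) * (c * hh (Suc n) a b)) sums (c * EE a b)"
proof -
  have "(\<lambda>n. c * (hh (Suc n) a b / fact (Suc n))) sums (c * EE a b)"
    by (rule sums_mult[OF sums_hh_Suc])
  then show ?thesis by (simp add: mult.commute mult.left_commute)
qed

lemma sums_c_31:
  "(\<lambda>n. 1 / fact (Suc n) * (c * hh (Suc n) a b + c' * hh2 (Suc n) a' b' c''))
     sums (c * EE a b + c' * CC a' b' c'')"
proof -
  have "(\<lambda>n. c * (hh (Suc n) a b / fact (Suc n)) + c' * (hh2 (Suc n) a' b' c'' / fact (Suc n)))
     sums (c * EE a b + c' * CC a' b' c'')"
    by (intro sums_add sums_mult sums_hh_Suc sums_hh2_Suc)
  moreover have "(\<lambda>n. 1 / fact (Suc n) * (c * hh (Suc n) a b + c' * hh2 (Suc n) a' b' c'')) =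
    (\<lambda>n. c * (hh (Suc n) a b / fact (Suc n)) + c' * (hh2 (Suc n) a' b' c'' / fact (Suc n)))"
    by (rule ext) (simp del: hh.simps hh2.simps fact_Suc add: field_simps)
  ultimately show ?thesis by simp
qed

lemma exp_map_mat11:
  "exp_map (mat11 d1 d2 d3 d4 d5 a21 a31 a51 a32 a34 a54) =
   mat11 (exp d1) (exp d2) (exp d3) (exp d4) (exp d5) (a21 * EE d2 d1)
     (a31 * EE d3 d1 + a32 * a21 * CC d3 d2 d1) (a51 * EE d5 d1)
     (a32 * EE d3 d2) (a34 * EE d3 d4) (a54 * EE d5 d4)"
proof (rule ext)
  fix v
  let ?M = "mat11 d1 d2 d3 d4 d5 a21 a31 a51 a32 a34 a54"
  have eq: "(\<lambda>n. (1 / fact (Suc n) :: complex) *s (?M ^^ Suc n) v) =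
    (\<lambda>n. mat11 (1 / fact (Suc n) * d1 ^ Suc n) (1 / fact (Suc n) * d2 ^ Suc n)
      (1 / fact (Suc n) * d3 ^ Suc n) (1 / fact (Suc n) * d4 ^ Suc n) (1 / fact (Suc n) * d5 ^ Suc n)
      (1 / fact (Suc n) * (a21 * hh (Suc n) d2 d1))
      (1 / fact (Suc n) * (a31 * hh (Suc n) d3 d1 + a32 * a21 * hh2 (Suc n) d3 d2 d1))
      (1 / fact (Suc n) * (a51 * hh (Suc n) d5 d1))
      (1 / fact (Suc n) * (a32 * hh (Suc n) d3 d2))
      (1 / fact (Suc n) * (a34 * hh (Suc n) d3 d4))
      (1 / fact (Suc n) * (a54 * hh (Suc n) d5 d4)) v)"
    by (simp only: mat11_pow mat11_scale)
  have "(\<lambda>n. (1 / fact (Suc n) :: complex) *s (?M ^^ Suc n) v) sums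
     mat11 (exp d1 - 1) (exp d2 - 1) (exp d3 - 1) (exp d4 - 1) (exp d5 - 1) (a21 * EE d2 d1)
     (a31 * EE d3 d1 + a32 * a21 * CC d3 d2 d1) (a51 * EE d5 d1)
     (a32 * EE d3 d2) (a34 * EE d3 d4) (a54 * EE d5 d4) v"
    unfolding eq by (intro mat11_sums sums_pow sums_c_hh sums_c_31)
  then have "exp_map ?M v = v + mat11 (exp d1 - 1) (exp d2 - 1) (exp d3 - 1) (exp d4 - 1) (exp d5 - 1) (a21 * EE d2 d1)
     (a31 * EE d3 d1 + a32 * a21 * CC d3 d2 d1) (a51 * EE d5 d1)
     (a32 * EE d3 d2) (a34 * EE d3 d4) (a54 * EE d5 d4) v"
    unfolding exp_map_def by (simp add: sums_unique[symmetric])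
  then show "exp_map ?M v = mat11 (exp d1) (exp d2) (exp d3) (exp d4) (exp d5) (a21 * EE d2 d1)
     (a31 * EE d3 d1 + a32 * a21 * CC d3 d2 d1) (a51 * EE d5 d1)
     (a32 * EE d3 d2) (a34 * EE d3 d4) (a54 * EE d5 d4) v"
    by (simp add: vec_eq_iff forall_5 algebra_simps)
qed

lemma hh_closed: "hh n a b * (a - b) = a ^ n - b ^ n"
proof (induction n)
  case 0 then show ?case by simp
next
  case (Suc n)
  have "hh (Suc n) a b * (a - b) = a * (hh n a b * (a - b)) + b ^ n * (a - b)"
    by (simp add: algebra_simps)
  also have "\<dots> = a * (a ^ n - b ^ n) + b ^ n * (a - b)" by (simp only: Suc)
  also have "\<dots> = a ^ Suc n - b ^ Suc n" by (simp add: algebra_simps)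
  finally show ?case .
qed

lemma hh_same: "hh (Suc n) a a = of_nat (Suc n) * a ^ n"
  by (induction n) (simp_all add: algebra_simps)

lemma EE_diff: "EE a b * (a - b) = exp a - exp b"
proof -
  have "(\<lambda>n. hh n a b / fact n * (a - b)) sums (EE a b * (a - b))"
    unfolding EE_def by (rule sums_mult2[OF summable_sums[OF summable_hh]])
  moreover have "(\<lambda>n. hh n a b / fact n * (a - b)) = (\<lambda>n. a ^ n / fact n - b ^ n / fact n)"
  proof (rule ext)
    fix n
    have "hh n a b / fact n * (a - b) = (hh n a b * (a - b)) / fact n" by simp
    also have "\<dots> = a ^ n / fact n - b ^ n / fact n" by (simp add: hh_closed diff_divide_distrib)
    finally show "hh n a b / fact n * (a - b) = a ^ n / fact n - b ^ n / fact n" .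
  qed
  moreover have "(\<lambda>n. a ^ n / fact n - b ^ n / fact n) sums (exp a - exp b)"
    by (intro sums_diff expc)
  ultimately show ?thesis using sums_unique2 by metis
qed

lemma EE_same: "EE a a = exp a"
proof -
  have "(\<lambda>n. hh (Suc n) a a / fact (Suc n)) sums EE a a" by (rule sums_hh_Suc)
  moreover have "(\<lambda>n. hh (Suc n) a a / fact (Suc n)) = (\<lambda>n. a ^ n / fact n)"
    by (rule ext) (simp add: hh_same del: of_nat_Suc hh.simps)
  ultimately show ?thesis using expc sums_unique2 by metis
qed

lemma EE_Ln_nonzero:
  assumes "x \<noteq> 0" "y \<noteq> 0"
  shows "EE (Ln x) (Ln y) \<noteq> 0"
proof (cases "Ln x = Ln y")
  case True
  then show ?thesis using EE_same[of "Ln x"] assms by simp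
next
  case False
  then have "x \<noteq> y" by auto
  moreover have "EE (Ln x) (Ln y) * (Ln x - Ln y) = x - y"
    using EE_diff[of "Ln x" "Ln y"] assms by simp
  ultimately show ?thesis by auto
qed


definition derm :: "complex \<Rightarrow> complex \<Rightarrow> complex \<Rightarrow> complex \<Rightarrow> complex \<Rightarrow> complex \<Rightarrow> complex \<Rightarrow> pi2 \<Rightarrow> pi2" where
  "derm a1 a2 a3 a4 a5 b3 b5 x = (\<chi> k.
     if k = 1 then a1 * x$1
     else if k = 2 then a2 * x$1 + 2 * a1 * x$2
     else if k = 3 then a3 * x$1 + 2 * a2 * x$2 + 3 * a1 * x$3 + b3 * x$4
     else if k = 4 then a4 * x$1 + (a1 + a4) * x$4
     else a5 * x$1 + 2 * a4 * x$2 + b5 * x$4 + 2 * (a1 + a4) * x$5)"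

lemma derm_nth [simp]:
  "derm a1 a2 a3 a4 a5 b3 b5 x $ 1 = a1 * x$1"
  "derm a1 a2 a3 a4 a5 b3 b5 x $ 2 = a2 * x$1 + 2 * a1 * x$2"
  "derm a1 a2 a3 a4 a5 b3 b5 x $ 3 = a3 * x$1 + 2 * a2 * x$2 + 3 * a1 * x$3 + b3 * x$4"
  "derm a1 a2 a3 a4 a5 b3 b5 x $ 4 = a4 * x$1 + (a1 + a4) * x$4"
  "derm a1 a2 a3 a4 a5 b3 b5 x $ 5 = a5 * x$1 + 2 * a4 * x$2 + b5 * x$4 + 2 * (a1 + a4) * x$5"
  by (simp_all add: derm_def)

lemma pi2_mult_nth [simp]:
  "pi2_mult x y $ 1 = 0"
  "pi2_mult x y $ 2 = x$1 * y$1"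
  "pi2_mult x y $ 3 = x$1 * y$2 + x$2 * y$1"
  "pi2_mult x y $ 4 = 0"
  "pi2_mult x y $ 5 = x$1 * y$4 + x$4 * y$1 + x$4 * y$4"
  by (simp_all add: pi2_mult_def)

lemma is_der_derm: "is_der (derm a1 a2 a3 a4 a5 b3 b5)"
  unfolding is_der_def clinear_iff
  by (simp add: vec_eq_iff forall_5 algebra_simps)

definition autm :: "complex \<Rightarrow> complex \<Rightarrow> complex \<Rightarrow> complex \<Rightarrow> complex \<Rightarrow> complex \<Rightarrow> complex \<Rightarrow> pi2 \<Rightarrow> pi2" where
  "autm c1 c2 c3 c4 c5 d3 d5 x = (\<chi> k.
     if k = 1 then c1 * x$1
     else if k = 2 then c2 * x$1 + c1^2 * x$2
     else if k = 3 then c3 * x$1 + 2 * c1 * c2 * x$2 + c1^3 * x$3 + d3 * x$4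
     else if k = 4 then c4 * x$1 + (c1 + c4) * x$4
     else c5 * x$1 + (2 * c1 * c4 + c4^2) * x$2 + d5 * x$4 + (c1 + c4)^2 * x$5)"

lemma autm_nth [simp]:
  "autm c1 c2 c3 c4 c5 d3 d5 x $ 1 = c1 * x$1"
  "autm c1 c2 c3 c4 c5 d3 d5 x $ 2 = c2 * x$1 + c1^2 * x$2"
  "autm c1 c2 c3 c4 c5 d3 d5 x $ 3 = c3 * x$1 + 2 * c1 * c2 * x$2 + c1^3 * x$3 + d3 * x$4"
  "autm c1 c2 c3 c4 c5 d3 d5 x $ 4 = c4 * x$1 + (c1 + c4) * x$4"
  "autm c1 c2 c3 c4 c5 d3 d5 x $ 5 = c5 * x$1 + (2 * c1 * c4 + c4^2) * x$2 + d5 * x$4 + (c1 + c4)^2 * x$5"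
  by (simp_all add: autm_def)

lemma clinear_autm: "clinear (autm c1 c2 c3 c4 c5 d3 d5)"
  unfolding clinear_iff by (simp add: vec_eq_iff forall_5 algebra_simps)

lemma is_aut_autm:
  assumes c1: "c1 \<noteq> 0" and u: "c1 + c4 \<noteq> 0"
  shows "is_aut (autm c1 c2 c3 c4 c5 d3 d5)"
proof -
  let ?f = "autm c1 c2 c3 c4 c5 d3 d5"
  have inj: "inj ?f"
  proof (rule injI)
    fix x y assume eq: "?f x = ?f y"
    have h: "?f x $ k = ?f y $ k" for k using eq by simp
    from h[of 1] c1 have x1: "x$1 = y$1" by simp
    from h[of 2] c1 x1 have x2: "x$2 = y$2" by simp
    from h[of 4] u x1 have x4: "x$4 = y$4" by simp
    from h[of 3] c1 x1 x2 x4 have x3: "x$3 = y$3" by simp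
    from h[of 5] u x1 x2 x4 have x5: "x$5 = y$5" by simp
    show "x = y" using x1 x2 x3 x4 x5 by (simp add: vec_eq_iff forall_5)
  qed
  have "surj ?f" using vec.linear_inj_imp_surj[OF _ inj] clinear_autm unfolding clinear_def by blast
  with inj have "bij ?f" by (simp add: bij_def)
  moreover have "\<forall>x y. ?f (pi2_mult x y) = pi2_mult (?f x) (?f y)"
    by (simp add: vec_eq_iff forall_5 algebra_simps power2_eq_square power3_eq_cube)
  ultimately show ?thesis using clinear_autm unfolding is_aut_def by blast
qed


lemma local_der_mat11: "local_der (mat11 d1 d2 d3 d4 d5 a21 a31 a51 a32 a34 a54)"
  unfolding local_der_def
proof (intro conjI allI)
  show "clinear (mat11 d1 d2 d3 d4 d5 a21 a31 a51 a32 a34 a54)" by (rule clinear_mat11)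
  fix x :: pi2
  let ?w = "mat11 d1 d2 d3 d4 d5 a21 a31 a51 a32 a34 a54 x"
  show "\<exists>D. is_der D \<and> ?w = D x"
  proof (cases "x$1 = 0")
    case False
    define a1 where "a1 = d1"
    define a4 where "a4 = d4 - d1"
    define a2 where "a2 = (?w$2 - 2 * a1 * x$2) / x$1"
    define a3 where "a3 = (?w$3 - 2 * a2 * x$2 - 3 * a1 * x$3) / x$1"
    define a5 where "a5 = (?w$5 - 2 * a4 * x$2 - 2 * (a1 + a4) * x$5) / x$1"
    have "?w = derm a1 a2 a3 a4 a5 0 0 x"
      using False unfolding vec_eq_iff forall_5
      by (simp add: a1_def a2_def a3_def a4_def a5_def field_simps del: mat11_nth) (simp add: algebra_simps)
    then show ?thesis using is_der_derm by blast
  next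
    case x1: True
    show ?thesis
    proof (cases "x$4 = 0")
      case False
      define a1 where "a1 = d2 / 2"
      define a4 where "a4 = d4 - a1"
      define b3 where "b3 = (?w$3 - 3 * a1 * x$3) / x$4"
      define b5 where "b5 = (?w$5 - 2 * a4 * x$2 - 2 * d4 * x$5) / x$4"
      have "?w = derm a1 0 0 a4 0 b3 b5 x"
        using False x1 unfolding vec_eq_iff forall_5
        by (simp add: a1_def a4_def b3_def b5_def field_simps del: mat11_nth) (simp add: algebra_simps)
      then show ?thesis using is_der_derm by blast
    next
      case x4: True
      show ?thesis
      proof (cases "x$2 = 0")
        case False
        define a1 where "a1 = d2 / 2"
        define a4 where "a4 = d5 / 2 - d2 / 2"
        define a2 where "a2 = (?w$3 - 3 * a1 * x$3) / (2 * x$2)"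
        have "?w = derm a1 a2 0 a4 0 0 0 x"
          using False x1 x4 unfolding vec_eq_iff forall_5
          by (simp add: a1_def a4_def a2_def field_simps del: mat11_nth) (simp add: algebra_simps)
        then show ?thesis using is_der_derm by blast
      next
        case x2: True
        define a1 where "a1 = d3 / 3"
        define a4 where "a4 = d5 / 2 - a1"
        have "?w = derm a1 0 0 a4 0 0 0 x"
          using x1 x2 x4 unfolding vec_eq_iff forall_5
          by (simp add: a1_def a4_def field_simps)
        then show ?thesis using is_der_derm by blast
      qed
    qed
  qed
qed


lemma cube_root_ex: "(z::complex) \<noteq> 0 \<Longrightarrow> \<exists>r. r \<noteq> 0 \<and> r ^ 3 = z"
proof -
  assume z: "z \<noteq> 0"
  have "exp (Ln z / 3) ^ 3 = exp (of_nat 3 * (Ln z / 3))" by (rule exp_of_nat_mult[symmetric])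
  also have "\<dots> = z" using z by simp
  finally show ?thesis by (intro exI[of _ "exp (Ln z / 3)"]) simp
qed

lemma local_aut_mat11:
  assumes nz: "D1 \<noteq> 0" "D2 \<noteq> 0" "D3 \<noteq> 0" "D4 \<noteq> 0" "D5 \<noteq> 0"
  shows "local_aut (mat11 D1 D2 D3 D4 D5 A21 A31 A51 A32 A34 A54)"
  unfolding local_aut_def
proof (intro conjI allI)
  show "clinear (mat11 D1 D2 D3 D4 D5 A21 A31 A51 A32 A34 A54)" by (rule clinear_mat11)
  fix x :: pi2
  let ?w = "mat11 D1 D2 D3 D4 D5 A21 A31 A51 A32 A34 A54 x"
  show "\<exists>\<phi>. is_aut \<phi> \<and> ?w = \<phi> x"
  proof (cases "x$1 = 0")
    case False
    define c1 where "c1 = D1"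
    define c4 where "c4 = D4 - D1"
    define c2 where "c2 = (?w$2 - c1^2 * x$2) / x$1"
    define c3 where "c3 = (?w$3 - 2 * c1 * c2 * x$2 - c1^3 * x$3) / x$1"
    define c5 where "c5 = (?w$5 - (2 * c1 * c4 + c4^2) * x$2 - (c1 + c4)^2 * x$5) / x$1"
    have "?w = autm c1 c2 c3 c4 c5 0 0 x"
      using False unfolding vec_eq_iff forall_5
      by (simp add: c1_def c2_def c3_def c4_def c5_def field_simps del: mat11_nth) (simp add: algebra_simps)
    moreover have "is_aut (autm c1 c2 c3 c4 c5 0 0)"
      by (rule is_aut_autm) (use nz in \<open>simp_all add: c1_def c4_def\<close>)
    ultimately show ?thesis by blast
  next
    case x1: True
    define c1 where "c1 = csqrt D2"
    have c1sq: "c1^2 = D2" by (simp add: c1_def)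
    have c1nz: "c1 \<noteq> 0" using nz by (simp add: c1_def)
    show ?thesis
    proof (cases "x$4 = 0")
      case False
      define c4 where "c4 = D4 - c1"
      define d3 where "d3 = (?w$3 - c1^3 * x$3) / x$4"
      define d5 where "d5 = (?w$5 - (2 * c1 * c4 + c4^2) * x$2 - D4^2 * x$5) / x$4"
      have "?w = autm c1 0 0 c4 0 d3 d5 x"
        using False x1 c1sq unfolding vec_eq_iff forall_5
        by (simp add: c4_def d3_def d5_def field_simps del: mat11_nth) (simp add: algebra_simps)
      moreover have "is_aut (autm c1 0 0 c4 0 d3 d5)"
        by (rule is_aut_autm) (use nz c1nz in \<open>simp_all add: c4_def\<close>)
      ultimately show ?thesis by blast
    next
      case x4: True
      show ?thesis
      proof (cases "x$2 = 0")
        case False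
        define u where "u = csqrt D5"
        have usq: "u^2 = D5" by (simp add: u_def)
        have unz: "u \<noteq> 0" using nz by (simp add: u_def)
        define c4 where "c4 = u - c1"
        define c2 where "c2 = (?w$3 - c1^3 * x$3) / (2 * c1 * x$2)"
        have "?w = autm c1 c2 0 c4 0 0 0 x"
          using False x1 x4 c1sq usq c1nz unfolding vec_eq_iff forall_5
          by (simp add: c4_def c2_def field_simps del: mat11_nth) (simp add: algebra_simps power2_eq_square)
        moreover have "is_aut (autm c1 c2 0 c4 0 0 0)"
          by (rule is_aut_autm) (use unz c1nz in \<open>simp_all add: c4_def\<close>)
        ultimately show ?thesis by blast
      next
        case x2: True
        obtain r where r: "r \<noteq> 0" "r^3 = D3" using cube_root_ex[OF nz(3)] by blast
        define u where "u = csqrt D5"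
        have usq: "u^2 = D5" by (simp add: u_def)
        have unz: "u \<noteq> 0" using nz by (simp add: u_def)
        define c4 where "c4 = u - r"
        have "?w = autm r 0 0 c4 0 0 0 x"
          using x1 x2 x4 usq r unfolding vec_eq_iff forall_5
          by (simp add: c4_def)
        moreover have "is_aut (autm r 0 0 c4 0 0 0)"
          by (rule is_aut_autm) (use unz r in \<open>simp_all add: c4_def\<close>)
        ultimately show ?thesis by blast
      qed
    qed
  qed
qed


lemma E_mults:
  "E 2 = pi2_mult (E 1) (E 1)" "E 3 = pi2_mult (E 1) (E 2)"
  "E 5 = pi2_mult (E 4) (E 4)" "E 5 = pi2_mult (E 1) (E 4)"
  "pi2_mult (E 2) (E 4) = 0"
  by (simp_all add: vec_eq_iff forall_5)

lemma der_facts: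
  assumes "is_der D"
  shows "D (E 2) $ 1 = 0" "D (E 2) $ 4 = 0"
    "D (E 3) $ 1 = 0" "D (E 3) $ 2 = 0" "D (E 3) $ 4 = 0" "D (E 3) $ 5 = 0"
    "D (E 4) $ 1 = 0" "D (E 4) $ 2 = 0"
    "D (E 5) $ 1 = 0" "D (E 5) $ 2 = 0" "D (E 5) $ 3 = 0" "D (E 5) $ 4 = 0"
    "D (E 1 - E 4) $ 4 = - (D (E 1 - E 4) $ 1)"
    "D (E 2 - E 5) $ 5 = - (D (E 2 - E 5) $ 2)"
proof -
  have lin: "clinear D" and m: "\<And>x y. D (pi2_mult x y) = pi2_mult (D x) y + pi2_mult x (D y)"
    using assms unfolding is_der_def by auto
  have d2: "D (E 2) = pi2_mult (D (E 1)) (E 1) + pi2_mult (E 1) (D (E 1))"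
    using m[of "E 1" "E 1"] E_mults by simp
  have d3: "D (E 3) = pi2_mult (D (E 1)) (E 2) + pi2_mult (E 1) (D (E 2))"
    using m[of "E 1" "E 2"] E_mults by simp
  have d5a: "D (E 5) = pi2_mult (D (E 4)) (E 4) + pi2_mult (E 4) (D (E 4))"
    using m[of "E 4" "E 4"] E_mults by simp
  have d5b: "D (E 5) = pi2_mult (D (E 1)) (E 4) + pi2_mult (E 1) (D (E 4))"
    using m[of "E 1" "E 4"] E_mults by simp
  have c: "(pi2_mult (D (E 4)) (E 4) + pi2_mult (E 4) (D (E 4))) $ k =
      (pi2_mult (D (E 1)) (E 4) + pi2_mult (E 1) (D (E 4))) $ k" for k
    using d5a d5b by simp
  from c[of 2] have b1: "D (E 4) $ 1 = 0" by simp
  from c[of 3] b1 have b2: "D (E 4) $ 2 = 0" by simp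
  from c[of 5] b1 have b4: "D (E 4) $ 4 = D (E 1) $ 1 + D (E 1) $ 4" by simp
  show "D (E 2) $ 1 = 0" "D (E 2) $ 4 = 0" using d2 by simp_all
  show "D (E 3) $ 1 = 0" "D (E 3) $ 2 = 0" "D (E 3) $ 4 = 0" "D (E 3) $ 5 = 0"
    using d3 d2 by simp_all
  show "D (E 4) $ 1 = 0" "D (E 4) $ 2 = 0" by (fact b1, fact b2)
  show "D (E 5) $ 1 = 0" "D (E 5) $ 2 = 0" "D (E 5) $ 3 = 0" "D (E 5) $ 4 = 0"
    using d5a b1 b2 by simp_all
  show "D (E 1 - E 4) $ 4 = - (D (E 1 - E 4) $ 1)"
    using clinear_diff[OF lin, of "E 1" "E 4"] b1 b4 by simp
  show "D (E 2 - E 5) $ 5 = - (D (E 2 - E 5) $ 2)"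
  proof -
    have e: "D (E 2 - E 5) $ k = D (E 2) $ k - D (E 5) $ k" for k
      using clinear_diff[OF lin, of "E 2" "E 5"] by simp
    show ?thesis unfolding e d2 d5a using b1 b2 b4 by simp
  qed
qed

lemma local_der_form:
  assumes "local_der N"
  shows "N = mat11 (N (E 1) $ 1) (N (E 2) $ 2) (N (E 3) $ 3) (N (E 4) $ 4) (N (E 5) $ 5)
     (N (E 1) $ 2) (N (E 1) $ 3 - N (E 4) $ 3) (N (E 1) $ 5 - N (E 4) $ 5 + N (E 1) $ 2)
     (N (E 2) $ 3) (N (E 4) $ 3) (N (E 4) $ 5)"
proof -
  have lin: "clinear N" and loc: "\<And>x. \<exists>D. is_der D \<and> N x = D x"
    using assms unfolding local_der_def by auto
  have F: "\<And>x. \<exists>D. is_der D \<and> N x = D x" by (fact loc)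
  obtain D2 where D2: "is_der D2" "N (E 2) = D2 (E 2)" using F by blast
  obtain D3 where D3: "is_der D3" "N (E 3) = D3 (E 3)" using F by blast
  obtain D4 where D4: "is_der D4" "N (E 4) = D4 (E 4)" using F by blast
  obtain D5 where D5: "is_der D5" "N (E 5) = D5 (E 5)" using F by blast
  obtain D14 where D14: "is_der D14" "N (E 1 - E 4) = D14 (E 1 - E 4)" using F by blast
  obtain D25 where D25: "is_der D25" "N (E 2 - E 5) = D25 (E 2 - E 5)" using F by blast
  note f2 = der_facts[OF D2(1)] and f3 = der_facts[OF D3(1)] and f4 = der_facts[OF D4(1)]
    and f5 = der_facts[OF D5(1)] and f14 = der_facts[OF D14(1)] and f25 = der_facts[OF D25(1)]
  have n2: "N (E 2) $ 1 = 0" "N (E 2) $ 4 = 0" using f2 D2 by simp_all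
  have n3: "N (E 3) $ 1 = 0" "N (E 3) $ 2 = 0" "N (E 3) $ 4 = 0" "N (E 3) $ 5 = 0"
    using f3 D3 by simp_all
  have n4: "N (E 4) $ 1 = 0" "N (E 4) $ 2 = 0" using f4 D4 by simp_all
  have n5: "N (E 5) $ 1 = 0" "N (E 5) $ 2 = 0" "N (E 5) $ 3 = 0" "N (E 5) $ 4 = 0"
    using f5 D5 by simp_all
  have e14: "N (E 1) - N (E 4) = D14 (E 1 - E 4)"
    using D14(2) clinear_diff[OF lin, of "E 1" "E 4"] by simp
  have "(N (E 1) - N (E 4)) $ 4 = - ((N (E 1) - N (E 4)) $ 1)" unfolding e14 by (rule f14(13))
  then have n14: "N (E 1) $ 4 - N (E 4) $ 4 = - (N (E 1) $ 1 - N (E 4) $ 1)" by simp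
  have e25: "N (E 2) - N (E 5) = D25 (E 2 - E 5)"
    using D25(2) clinear_diff[OF lin, of "E 2" "E 5"] by simp
  have "(N (E 2) - N (E 5)) $ 5 = - ((N (E 2) - N (E 5)) $ 2)" unfolding e25 by (rule f25(14))
  then have n25: "N (E 2) $ 5 - N (E 5) $ 5 = - (N (E 2) $ 2 - N (E 5) $ 2)" by simp
  have n14': "N (E 4) $ 4 = N (E 1) $ 1 + N (E 1) $ 4" using n14 n4 by (simp add: algebra_simps)
  have n25': "N (E 5) $ 5 = N (E 2) $ 2 + N (E 2) $ 5" using n25 n5 by (simp add: algebra_simps)
  show ?thesis
  proof (rule ext)
    fix v
    show "N v = mat11 (N (E 1) $ 1) (N (E 2) $ 2) (N (E 3) $ 3) (N (E 4) $ 4) (N (E 5) $ 5)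
     (N (E 1) $ 2) (N (E 1) $ 3 - N (E 4) $ 3) (N (E 1) $ 5 - N (E 4) $ 5 + N (E 1) $ 2)
     (N (E 2) $ 3) (N (E 4) $ 3) (N (E 4) $ 5) v"
      apply (subst clinear_expand[OF lin])
      using n2 n3 n4 n5 n14' n25'
      by (simp add: vec_eq_iff forall_5 algebra_simps)
  qed
qed


lemma E_nonzero: "E k \<noteq> 0"
proof
  assume "E k = 0"
  then have "E k $ k = (0::pi2) $ k" by simp
  then show False by simp
qed

lemma aut_facts:
  assumes "is_aut \<phi>"
  shows "\<phi> (E 1) $ 1 \<noteq> 0"
    "\<phi> (E 2) $ 1 = 0" "\<phi> (E 2) $ 4 = 0" "\<phi> (E 2) $ 2 \<noteq> 0"
    "\<phi> (E 3) $ 1 = 0" "\<phi> (E 3) $ 2 = 0" "\<phi> (E 3) $ 4 = 0" "\<phi> (E 3) $ 5 = 0" "\<phi> (E 3) $ 3 \<noteq> 0"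
    "\<phi> (E 4) $ 1 = 0" "\<phi> (E 4) $ 2 = 0" "\<phi> (E 4) $ 4 \<noteq> 0"
    "\<phi> (E 5) $ 1 = 0" "\<phi> (E 5) $ 2 = 0" "\<phi> (E 5) $ 3 = 0" "\<phi> (E 5) $ 4 = 0" "\<phi> (E 5) $ 5 \<noteq> 0"
    "\<phi> (E 1 - E 4) $ 4 = - (\<phi> (E 1 - E 4) $ 1)"
    "\<phi> (E 2 - E 5) $ 5 = - (\<phi> (E 2 - E 5) $ 2)"
proof -
  have lin: "clinear \<phi>" and bij: "bij \<phi>" and m: "\<And>x y. \<phi> (pi2_mult x y) = pi2_mult (\<phi> x) (\<phi> y)"
    using assms unfolding is_aut_def by auto
  have z0: "\<phi> 0 = 0" by (rule clinear_zero[OF lin])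
  have nz: "\<phi> (E k) \<noteq> 0" for k
  proof
    assume "\<phi> (E k) = 0"
    then have "\<phi> (E k) = \<phi> 0" using z0 by simp
    then have "E k = 0" using bij by (simp add: bij_def inj_eq)
    then show False using E_nonzero by blast
  qed
  have p2: "\<phi> (E 2) = pi2_mult (\<phi> (E 1)) (\<phi> (E 1))" using m[of "E 1" "E 1"] E_mults by simp
  have p3: "\<phi> (E 3) = pi2_mult (\<phi> (E 1)) (\<phi> (E 2))" using m[of "E 1" "E 2"] E_mults by simp
  have p5a: "\<phi> (E 5) = pi2_mult (\<phi> (E 4)) (\<phi> (E 4))" using m[of "E 4" "E 4"] E_mults by simp
  have p5b: "\<phi> (E 5) = pi2_mult (\<phi> (E 1)) (\<phi> (E 4))" using m[of "E 1" "E 4"] E_mults by simp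
  have z: "pi2_mult (\<phi> (E 2)) (\<phi> (E 4)) = 0" using m[of "E 2" "E 4"] E_mults z0 by simp
  have c1: "\<phi> (E 1) $ 1 \<noteq> 0"
  proof
    assume "\<phi> (E 1) $ 1 = 0"
    then have "\<phi> (E 3) = 0" unfolding p3 p2 by (simp add: vec_eq_iff forall_5)
    then show False using nz by blast
  qed
  have "(pi2_mult (\<phi> (E 2)) (\<phi> (E 4))) $ 3 = 0" using z by simp
  then have d1: "\<phi> (E 4) $ 1 = 0" using c1 unfolding p2 by simp
  have c: "(pi2_mult (\<phi> (E 4)) (\<phi> (E 4))) $ k = (pi2_mult (\<phi> (E 1)) (\<phi> (E 4))) $ k" for k
    using p5a p5b by simp
  from c[of 3] d1 c1 have d2: "\<phi> (E 4) $ 2 = 0" by simp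
  from c[of 5] d1 have d4eq: "\<phi> (E 4) $ 4 * \<phi> (E 4) $ 4 = (\<phi> (E 1) $ 1 + \<phi> (E 1) $ 4) * \<phi> (E 4) $ 4"
    by (simp add: algebra_simps)
  have d4: "\<phi> (E 4) $ 4 \<noteq> 0"
  proof
    assume "\<phi> (E 4) $ 4 = 0"
    then have "\<phi> (E 5) = 0" unfolding p5a using d1 by (simp add: vec_eq_iff forall_5)
    then show False using nz by blast
  qed
  from d4eq d4 have d4v: "\<phi> (E 4) $ 4 = \<phi> (E 1) $ 1 + \<phi> (E 1) $ 4" by simp
  show "\<phi> (E 1) $ 1 \<noteq> 0" by (fact c1)
  show "\<phi> (E 2) $ 1 = 0" "\<phi> (E 2) $ 4 = 0" "\<phi> (E 2) $ 2 \<noteq> 0" using c1 unfolding p2 by simp_all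
  show "\<phi> (E 3) $ 1 = 0" "\<phi> (E 3) $ 2 = 0" "\<phi> (E 3) $ 4 = 0" "\<phi> (E 3) $ 5 = 0" "\<phi> (E 3) $ 3 \<noteq> 0"
    using c1 unfolding p3 p2 by simp_all
  show "\<phi> (E 4) $ 1 = 0" "\<phi> (E 4) $ 2 = 0" "\<phi> (E 4) $ 4 \<noteq> 0" by (fact d1, fact d2, fact d4)
  show "\<phi> (E 5) $ 1 = 0" "\<phi> (E 5) $ 2 = 0" "\<phi> (E 5) $ 3 = 0" "\<phi> (E 5) $ 4 = 0" "\<phi> (E 5) $ 5 \<noteq> 0"
    using d1 d2 d4 unfolding p5a by simp_all
  show "\<phi> (E 1 - E 4) $ 4 = - (\<phi> (E 1 - E 4) $ 1)"
    using clinear_diff[OF lin, of "E 1" "E 4"] d1 d4v by simp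
  have e: "\<phi> (E 2 - E 5) $ k = \<phi> (E 2) $ k - \<phi> (E 5) $ k" for k
    using clinear_diff[OF lin, of "E 2" "E 5"] by simp
  show "\<phi> (E 2 - E 5) $ 5 = - (\<phi> (E 2 - E 5) $ 2)"
    unfolding e p2 p5a using d1 d2 d4v by (simp add: algebra_simps)
qed

lemma local_aut_form:
  assumes "local_aut N"
  shows "N = mat11 (N (E 1) $ 1) (N (E 2) $ 2) (N (E 3) $ 3) (N (E 4) $ 4) (N (E 5) $ 5)
     (N (E 1) $ 2) (N (E 1) $ 3 - N (E 4) $ 3) (N (E 1) $ 5 - N (E 4) $ 5 + N (E 1) $ 2)
     (N (E 2) $ 3) (N (E 4) $ 3) (N (E 4) $ 5)"
    "N (E 1) $ 1 \<noteq> 0" "N (E 2) $ 2 \<noteq> 0" "N (E 3) $ 3 \<noteq> 0" "N (E 4) $ 4 \<noteq> 0" "N (E 5) $ 5 \<noteq> 0"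
proof -
  have lin: "clinear N" and F: "\<And>x. \<exists>D. is_aut D \<and> N x = D x"
    using assms unfolding local_aut_def by auto
  obtain D1 where D1: "is_aut D1" "N (E 1) = D1 (E 1)" using F by blast
  obtain D2 where D2: "is_aut D2" "N (E 2) = D2 (E 2)" using F by blast
  obtain D3 where D3: "is_aut D3" "N (E 3) = D3 (E 3)" using F by blast
  obtain D4 where D4: "is_aut D4" "N (E 4) = D4 (E 4)" using F by blast
  obtain D5 where D5: "is_aut D5" "N (E 5) = D5 (E 5)" using F by blast
  obtain D14 where D14: "is_aut D14" "N (E 1 - E 4) = D14 (E 1 - E 4)" using F by blast
  obtain D25 where D25: "is_aut D25" "N (E 2 - E 5) = D25 (E 2 - E 5)" using F by blast
  note f1 = aut_facts[OF D1(1)] and f2 = aut_facts[OF D2(1)] and f3 = aut_facts[OF D3(1)] and f4 = aut_facts[OF D4(1)]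
    and f5 = aut_facts[OF D5(1)] and f14 = aut_facts[OF D14(1)] and f25 = aut_facts[OF D25(1)]
  show "N (E 1) $ 1 \<noteq> 0" using f1 D1 by simp
  show "N (E 2) $ 2 \<noteq> 0" using f2 D2 by simp
  show "N (E 3) $ 3 \<noteq> 0" using f3 D3 by simp
  show "N (E 4) $ 4 \<noteq> 0" using f4 D4 by simp
  show "N (E 5) $ 5 \<noteq> 0" using f5 D5 by simp
  have n2: "N (E 2) $ 1 = 0" "N (E 2) $ 4 = 0" using f2 D2 by simp_all
  have n3: "N (E 3) $ 1 = 0" "N (E 3) $ 2 = 0" "N (E 3) $ 4 = 0" "N (E 3) $ 5 = 0"
    using f3 D3 by simp_all
  have n4: "N (E 4) $ 1 = 0" "N (E 4) $ 2 = 0" using f4 D4 by simp_all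
  have n5: "N (E 5) $ 1 = 0" "N (E 5) $ 2 = 0" "N (E 5) $ 3 = 0" "N (E 5) $ 4 = 0"
    using f5 D5 by simp_all
  have e14: "N (E 1) - N (E 4) = D14 (E 1 - E 4)"
    using D14(2) clinear_diff[OF lin, of "E 1" "E 4"] by simp
  have "(N (E 1) - N (E 4)) $ 4 = - ((N (E 1) - N (E 4)) $ 1)" unfolding e14 by (rule f14(18))
  then have n14: "N (E 1) $ 4 - N (E 4) $ 4 = - (N (E 1) $ 1 - N (E 4) $ 1)" by simp
  have e25: "N (E 2) - N (E 5) = D25 (E 2 - E 5)"
    using D25(2) clinear_diff[OF lin, of "E 2" "E 5"] by simp
  have "(N (E 2) - N (E 5)) $ 5 = - ((N (E 2) - N (E 5)) $ 2)" unfolding e25 by (rule f25(19))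
  then have n25: "N (E 2) $ 5 - N (E 5) $ 5 = - (N (E 2) $ 2 - N (E 5) $ 2)" by simp
  have n14': "N (E 4) $ 4 = N (E 1) $ 1 + N (E 1) $ 4" using n14 n4 by (simp add: algebra_simps)
  have n25': "N (E 5) $ 5 = N (E 2) $ 2 + N (E 2) $ 5" using n25 n5 by (simp add: algebra_simps)
  show "N = mat11 (N (E 1) $ 1) (N (E 2) $ 2) (N (E 3) $ 3) (N (E 4) $ 4) (N (E 5) $ 5)
     (N (E 1) $ 2) (N (E 1) $ 3 - N (E 4) $ 3) (N (E 1) $ 5 - N (E 4) $ 5 + N (E 1) $ 2)
     (N (E 2) $ 3) (N (E 4) $ 3) (N (E 4) $ 5)"
  proof (rule ext)
    fix v
    show "N v = mat11 (N (E 1) $ 1) (N (E 2) $ 2) (N (E 3) $ 3) (N (E 4) $ 4) (N (E 5) $ 5)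
     (N (E 1) $ 2) (N (E 1) $ 3 - N (E 4) $ 3) (N (E 1) $ 5 - N (E 4) $ 5 + N (E 1) $ 2)
     (N (E 2) $ 3) (N (E 4) $ 3) (N (E 4) $ 5) v"
      apply (subst clinear_expand[OF lin])
      using n2 n3 n4 n5 n14' n25'
      by (simp add: vec_eq_iff forall_5 algebra_simps)
  qed
qed

theorem theorem7p3:
  shows "{\<Phi>. local_aut \<Phi>} = {exp_map N | N. local_der N}"
proof (intro set_eqI iffI)
  fix \<Phi> assume "\<Phi> \<in> {\<Phi>. local_aut \<Phi>}"
  then have la: "local_aut \<Phi>" by simp
  define D1 where "D1 = \<Phi> (E 1) $ 1"
  define D2 where "D2 = \<Phi> (E 2) $ 2"
  define D3 where "D3 = \<Phi> (E 3) $ 3"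
  define D4 where "D4 = \<Phi> (E 4) $ 4"
  define D5 where "D5 = \<Phi> (E 5) $ 5"
  define A21 where "A21 = \<Phi> (E 1) $ 2"
  define A31 where "A31 = \<Phi> (E 1) $ 3 - \<Phi> (E 4) $ 3"
  define A51 where "A51 = \<Phi> (E 1) $ 5 - \<Phi> (E 4) $ 5 + \<Phi> (E 1) $ 2"
  define A32 where "A32 = \<Phi> (E 2) $ 3"
  define A34 where "A34 = \<Phi> (E 4) $ 3"
  define A54 where "A54 = \<Phi> (E 4) $ 5"
  have Phi: "\<Phi> = mat11 D1 D2 D3 D4 D5 A21 A31 A51 A32 A34 A54"
    and nz: "D1 \<noteq> 0" "D2 \<noteq> 0" "D3 \<noteq> 0" "D4 \<noteq> 0" "D5 \<noteq> 0"
    using local_aut_form[OF la] unfolding D1_def D2_def D3_def D4_def D5_def A21_def A31_def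
      A51_def A32_def A34_def A54_def by auto
  define d1 where "d1 = Ln D1"
  define d2 where "d2 = Ln D2"
  define d3 where "d3 = Ln D3"
  define d4 where "d4 = Ln D4"
  define d5 where "d5 = Ln D5"
  have E21: "EE d2 d1 \<noteq> 0" and E31: "EE d3 d1 \<noteq> 0" and E51: "EE d5 d1 \<noteq> 0"
    and E32: "EE d3 d2 \<noteq> 0" and E34: "EE d3 d4 \<noteq> 0" and E54: "EE d5 d4 \<noteq> 0"
    unfolding d1_def d2_def d3_def d4_def d5_def using nz by (simp_all add: EE_Ln_nonzero)
  define a21 where "a21 = A21 / EE d2 d1"
  define a51 where "a51 = A51 / EE d5 d1"
  define a32 where "a32 = A32 / EE d3 d2"
  define a34 where "a34 = A34 / EE d3 d4"
  define a54 where "a54 = A54 / EE d5 d4"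
  define a31 where "a31 = (A31 - a32 * a21 * CC d3 d2 d1) / EE d3 d1"
  let ?N = "mat11 d1 d2 d3 d4 d5 a21 a31 a51 a32 a34 a54"
  have "exp_map ?N = \<Phi>"
    unfolding exp_map_mat11 Phi
    using nz E21 E31 E51 E32 E34 E54
    by (simp add: d1_def d2_def d3_def d4_def d5_def a21_def a51_def a32_def a34_def a54_def a31_def)
  moreover have "local_der ?N" by (rule local_der_mat11)
  ultimately show "\<Phi> \<in> {exp_map N | N. local_der N}" by blast
next
  fix \<Phi> assume "\<Phi> \<in> {exp_map N | N. local_der N}"
  then obtain N where N: "local_der N" "\<Phi> = exp_map N" by blast
  have "\<Phi> = exp_map (mat11 (N (E 1) $ 1) (N (E 2) $ 2) (N (E 3) $ 3) (N (E 4) $ 4) (N (E 5) $ 5)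
     (N (E 1) $ 2) (N (E 1) $ 3 - N (E 4) $ 3) (N (E 1) $ 5 - N (E 4) $ 5 + N (E 1) $ 2)
     (N (E 2) $ 3) (N (E 4) $ 3) (N (E 4) $ 5))"
    using N local_der_form[OF N(1)] by simp
  then have "local_aut \<Phi>"
    unfolding exp_map_mat11 by (simp add: local_aut_mat11)
  then show "\<Phi> \<in> {\<Phi>. local_aut \<Phi>}" by simp
qed

end
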